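(* For each $n\ge1$, the natural truncation map $\pi_n:\mathfrak{krv}^{(n+1)}\to\mathfrak{krv}^{(n)}$ is a surjective Lie algebra homomorphism.
   Context: Let $\mathbb{L}$ be the degree completion of the free Lie algebra over $\mathbb{C}$ on $x,y$ (degree = number of letters), $\mathsf{A}$ the degree-completed free associative algebra on $x,y$, $\mathrm{cyc}=\mathsf{A}/[\mathsf{A},\mathsf{A}]$ (quotient by the span of $ab-ba$) with quotient map $\mathrm{tr}$. For $n\ge1$, $\mathbb{L}_{\le n}$, $\mathsf{A}_{\le n}$, $\mathrm{cyc}_{\le n}$ denote quotients by elements of degree $\ge n+1$. $\mathfrak{tder}_{\le n}$ is the Lie algebra (under commutator) of tangential derivations of $\mathbb{L}_{\le n}$: Lie derivations $u$ with $u(x)=[x,u_1]$, $u(y)=[y,u_2]$ for some $u_1,u_2\in\mathbb{L}_{\le n}$, written $u=(u_1,u_2)$. Writing $a=a_0+\partial_x(a)x+\partial_y(a)y$ uniquely, the divergence is $j(u)=\mathrm{tr}(\partial_x(u_1)x+\partial_y(u_2)y)\in\mathrm{cyc}_{\le n}$. The projections $\pi_n:\mathfrak{tder}_{\le n+1}\to\mathfrak{tder}_{\le n}$ are induced by $\mathbb{L}_{\le n+1}\to\mathbb{L}_{\le n}$. $\mathfrak{krv}^{(n)}$ is the Lie subalgebra of $u\in\mathfrak{tder}_{\le n}$ for which $u(x+y)=0$ in $\mathbb{L}_{\le n}$ and there exists $r\in\mathbb{C}[[z]]/z^{n+1}$ with $j(u)=\mathrm{tr}(r(x+y)-r(x)-r(y))$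 in $\mathrm{cyc}_{\le n}$. *)

theory Defs
  imports Complex_Main
begin

datatype gen = X | Y

text \<open>An element of the degree-completed free associative algebra A is an arbitrary
  formal series, i.e. a function from words to coefficients.\<close>
type_synonym ser = "gen list \<Rightarrow> complex"

definition szero :: ser where "szero = (\<lambda>w. 0)"
definition sadd :: "ser \<Rightarrow> ser \<Rightarrow> ser" where "sadd a b = (\<lambda>w. a w + b w)"
definition ssub :: "ser \<Rightarrow> ser \<Rightarrow> ser" where "ssub a b = (\<lambda>w. a w - b w)"
definition ssc :: "complex \<Rightarrow> ser \<Rightarrow> ser" where "ssc c a = (\<lambda>w. c * a w)"

definition smul :: "ser \<Rightarrow> ser \<Rightarrow> ser" where
  "smul a b = (\<lambda>w. \<Sum>k\<in>{..length w}. a (take k w) * b (drop k w))"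

definition sone :: ser where "sone = (\<lambda>w. if w = [] then 1 else 0)"

primrec spow :: "ser \<Rightarrow> nat \<Rightarrow> ser" where
  "spow a 0 = sone"
| "spow a (Suc k) = smul a (spow a k)"

definition sbr :: "ser \<Rightarrow> ser \<Rightarrow> ser" where "sbr a b = ssub (smul a b) (smul b a)"

definition sgen :: "gen \<Rightarrow> ser" where "sgen g = (\<lambda>w. if w = [g] then 1 else 0)"

text \<open>Truncation: quotient by elements of degree \<ge> n+1 (canonical representative).\<close>
definition trunc :: "nat \<Rightarrow> ser \<Rightarrow> ser" where
  "trunc n a = (\<lambda>w. if length w \<le> n then a w else 0)"

text \<open>Lie polynomials: the Lie subalgebra of A generated by x and y (the free Lie algebra
  on x, y, embedded in the free associative algebra).\<close>
inductive_set liepoly :: "ser set" where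
  gen: "sgen g \<in> liepoly"
| add: "a \<in> liepoly \<Longrightarrow> b \<in> liepoly \<Longrightarrow> sadd a b \<in> liepoly"
| scal: "a \<in> liepoly \<Longrightarrow> ssc c a \<in> liepoly"
| br: "a \<in> liepoly \<Longrightarrow> b \<in> liepoly \<Longrightarrow> sbr a b \<in> liepoly"

text \<open>L_{\<le>n}: Lie elements of degree \<le> n (canonical representatives of L / degree \<ge> n+1).\<close>
definition L_le :: "nat \<Rightarrow> ser set" where
  "L_le n = {a \<in> liepoly. \<forall>w. n < length w \<longrightarrow> a w = 0}"

text \<open>By convention it is zero
  outside L_{\<le>n} (extensionality), so that equal derivations are equal functions.\<close>
definition is_tang :: "nat \<Rightarrow> (ser \<Rightarrow> ser) \<Rightarrow> ser \<Rightarrow> ser \<Rightarrow> bool" where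
  "is_tang n D u1 u2 \<longleftrightarrow> u1 \<in> L_le n \<and> u2 \<in> L_le n \<and>
     D (sgen X) = trunc n (sbr (sgen X) u1) \<and> D (sgen Y) = trunc n (sbr (sgen Y) u2)"

definition tder :: "nat \<Rightarrow> (ser \<Rightarrow> ser) set" where
  "tder n = {D.
     (\<forall>f. f \<notin> L_le n \<longrightarrow> D f = szero) \<and>
     (\<forall>f\<in>L_le n. D f \<in> L_le n) \<and>
     (\<forall>f\<in>L_le n. \<forall>g\<in>L_le n. D (sadd f g) = sadd (D f) (D g)) \<and>
     (\<forall>f\<in>L_le n. \<forall>c. D (ssc c f) = ssc c (D f)) \<and>
     (\<forall>f\<in>L_le n. \<forall>g\<in>L_le n.
        D (trunc n (sbr f g)) = trunc n (sadd (sbr (D f) g) (sbr f (D g)))) \<and>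
     (\<exists>u1 u2. is_tang n D u1 u2)}"

definition dcomm :: "(ser \<Rightarrow> ser) \<Rightarrow> (ser \<Rightarrow> ser) \<Rightarrow> ser \<Rightarrow> ser" where
  "dcomm D E = (\<lambda>f. ssub (D (E f)) (E (D f)))"
definition dadd :: "(ser \<Rightarrow> ser) \<Rightarrow> (ser \<Rightarrow> ser) \<Rightarrow> ser \<Rightarrow> ser" where
  "dadd D E = (\<lambda>f. sadd (D f) (E f))"
definition dsc :: "complex \<Rightarrow> (ser \<Rightarrow> ser) \<Rightarrow> ser \<Rightarrow> ser" where
  "dsc c D = (\<lambda>f. ssc c (D f))"

text \<open>The projection pi_n : tder_{\<le>n+1} \<rightarrow> tder_{\<le>n} induced by L_{\<le>n+1} \<rightarrow> L_{\<le>n}: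
  an element f of L_{\<le>n} is lifted to itself in L_{\<le>n+1}, D is applied, and the
  result is reduced modulo degree \<ge> n+1.\<close>
definition proj :: "nat \<Rightarrow> (ser \<Rightarrow> ser) \<Rightarrow> ser \<Rightarrow> ser" where
  "proj n D = (\<lambda>f. if f \<in> L_le n then trunc n (D f) else szero)"

text \<open>a = a_0 + \<partial>_x(a) x + \<partial>_y(a) y.\<close>
definition dpart :: "gen \<Rightarrow> ser \<Rightarrow> ser" where "dpart g a = (\<lambda>w. a (w @ [g]))"

definition jdiv :: "ser \<Rightarrow> ser \<Rightarrow> ser" where
  "jdiv u1 u2 = sadd (smul (dpart X u1) (sgen X)) (smul (dpart Y u2) (sgen Y))"

inductive_set comm_sub :: "nat \<Rightarrow> ser set" for n where
  zero: "szero \<in> comm_sub n"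
| comm: "trunc n (sbr p q) \<in> comm_sub n"
| add: "a \<in> comm_sub n \<Longrightarrow> b \<in> comm_sub n \<Longrightarrow> sadd a b \<in> comm_sub n"
| scal: "a \<in> comm_sub n \<Longrightarrow> ssc c a \<in> comm_sub n"

text \<open>tr(a) = tr(b) in cyc_{\<le>n} = A_{\<le>n}/[A_{\<le>n},A_{\<le>n}].\<close>
definition cyc_eq :: "nat \<Rightarrow> ser \<Rightarrow> ser \<Rightarrow> bool" where
  "cyc_eq n a b \<longleftrightarrow> trunc n (ssub a b) \<in> comm_sub n"

text \<open>Evaluation of r = \<Sum>_{k\<le>n} r_k z^k \<in> \<complex>[[z]]/z^{n+1} at a series s.\<close>
definition reval :: "nat \<Rightarrow> (nat \<Rightarrow> complex) \<Rightarrow> ser \<Rightarrow> ser" where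
  "reval n r s = (\<lambda>w. \<Sum>k\<le>n. r k * spow s k w)"

definition krv :: "nat \<Rightarrow> (ser \<Rightarrow> ser) set" where
  "krv n = {D \<in> tder n.
     D (sadd (sgen X) (sgen Y)) = szero \<and>
     (\<exists>u1 u2 r. is_tang n D u1 u2 \<and>
        cyc_eq n (jdiv u1 u2)
          (ssub (ssub (reval n r (sadd (sgen X) (sgen Y))) (reval n r (sgen X)))
                (reval n r (sgen Y))))}"

end

theory Submission
  imports Defs
begin

definition dl :: "gen \<Rightarrow> ser \<Rightarrow> ser" where "dl h a = (\<lambda>v. a (h # v))"

lemma sadd_apply[simp]: "sadd a b w = a w + b w" by (simp add: sadd_def)
lemma ssub_apply[simp]: "ssub a b w = a w - b w" by (simp add: ssub_def)
lemma ssc_apply[simp]: "ssc c a w = c * a w" by (simp add: ssc_def)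
lemma szero_apply[simp]: "szero w = 0" by (simp add: szero_def)

lemma smul_Nil: "smul a b [] = a [] * b []"
  by (simp add: smul_def)

lemma smul_Cons: "smul a b (h # w) = a [] * b (h # w) + smul (dl h a) b w"
  unfolding smul_def dl_def
  by (simp add: sum.atMost_Suc_shift del: sum.atMost_Suc)

lemma dl_smul: "dl h (smul a b) = sadd (smul (dl h a) b) (ssc (a []) (dl h b))"
  by (rule ext) (simp add: smul_Cons dl_def)

lemma smul_sadd_l: "smul (sadd a b) c = sadd (smul a c) (smul b c)"
  by (rule ext) (simp add: smul_def sum.distrib algebra_simps)
lemma smul_sadd_r: "smul a (sadd b c) = sadd (smul a b) (smul a c)"
  by (rule ext) (simp add: smul_def sum.distrib algebra_simps)
lemma smul_ssub_l: "smul (ssub a b) c = ssub (smul a c) (smul b c)"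
  by (rule ext) (simp add: smul_def sum_subtractf algebra_simps)
lemma smul_ssub_r: "smul a (ssub b c) = ssub (smul a b) (smul a c)"
  by (rule ext) (simp add: smul_def sum_subtractf algebra_simps)
lemma smul_ssc_l: "smul (ssc k a) c = ssc k (smul a c)"
  by (rule ext) (simp add: smul_def sum_distrib_left algebra_simps)
lemma smul_ssc_r: "smul a (ssc k c) = ssc k (smul a c)"
  by (rule ext) (simp add: smul_def sum_distrib_left algebra_simps)
lemma smul_szero_l: "smul szero c = szero"
  by (rule ext) (simp add: smul_def)
lemma smul_szero_r: "smul c szero = szero"
  by (rule ext) (simp add: smul_def)

lemma dl_sadd: "dl h (sadd a b) = sadd (dl h a) (dl h b)" by (rule ext) (simp add: dl_def)
lemma dl_ssub: "dl h (ssub a b) = ssub (dl h a) (dl h b)" by (rule ext) (simp add: dl_def)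
lemma dl_ssc: "dl h (ssc c a) = ssc c (dl h a)" by (rule ext) (simp add: dl_def)
lemma dl_szero: "dl h szero = szero" by (rule ext) (simp add: dl_def)

lemma smul_assoc_pt: "smul (smul a b) c w = smul a (smul b c) w"
proof (induction w arbitrary: a b c)
  case Nil
  then show ?case by (simp add: smul_Nil)
next
  case (Cons h w)
  show ?case
    apply (simp only: smul_Cons smul_Nil dl_smul smul_sadd_l smul_ssc_l)
    apply (simp add: Cons.IH algebra_simps)
    done
qed

lemma smul_assoc: "smul (smul a b) c = smul a (smul b c)"
  by (rule ext) (rule smul_assoc_pt)

definition Sop :: "(gen \<Rightarrow> ser) \<Rightarrow> ser \<Rightarrow> ser" where
  "Sop U a = sadd (smul (U X) (dl X a)) (smul (U Y) (dl Y a))"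

primrec dd :: "(gen \<Rightarrow> ser) \<Rightarrow> gen list \<Rightarrow> ser \<Rightarrow> complex" where
  "dd U [] a = 0"
| "dd U (h # w) a = Sop U a (h # w) + dd U w (dl h a)"

definition sderiv :: "(gen \<Rightarrow> ser) \<Rightarrow> ser \<Rightarrow> ser" where
  "sderiv U a = (\<lambda>w. dd U w a)"

lemma Sop_sadd: "Sop U (sadd a b) = sadd (Sop U a) (Sop U b)"
  unfolding Sop_def dl_sadd smul_sadd_r by (rule ext) simp
lemma Sop_ssc: "Sop U (ssc c a) = ssc c (Sop U a)"
  unfolding Sop_def dl_ssc smul_ssc_r by (rule ext) (simp add: algebra_simps)
lemma Sop_ssub: "Sop U (ssub a b) = ssub (Sop U a) (Sop U b)"
  unfolding Sop_def dl_ssub smul_ssub_r by (rule ext) simp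
lemma Sop_szero: "Sop U szero = szero"
  unfolding Sop_def dl_szero smul_szero_r by (rule ext) simp

lemma dd_sadd: "dd U w (sadd a b) = dd U w a + dd U w b"
  by (induction w arbitrary: a b) (simp_all add: Sop_sadd dl_sadd)
lemma dd_ssc: "dd U w (ssc c a) = c * dd U w a"
  by (induction w arbitrary: a) (simp_all add: Sop_ssc dl_ssc algebra_simps)
lemma dd_ssub: "dd U w (ssub a b) = dd U w a - dd U w b"
  by (induction w arbitrary: a b) (simp_all add: Sop_ssub dl_ssub)
lemma dd_szero: "dd U w szero = 0"
  by (induction w) (simp_all only: dd.simps Sop_szero dl_szero, simp_all add: szero_def)

lemma sderiv_sadd: "sderiv U (sadd a b) = sadd (sderiv U a) (sderiv U b)"
  unfolding sderiv_def dd_sadd by (rule ext) simp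
lemma sderiv_ssc: "sderiv U (ssc c a) = ssc c (sderiv U a)"
  unfolding sderiv_def dd_ssc by (rule ext) simp
lemma sderiv_ssub: "sderiv U (ssub a b) = ssub (sderiv U a) (sderiv U b)"
  unfolding sderiv_def dd_ssub by (rule ext) simp
lemma sderiv_szero: "sderiv U szero = szero"
  unfolding sderiv_def dd_szero by (rule ext) simp

lemma Sop_smul: "Sop U (smul a b) = sadd (smul (Sop U a) b) (ssc (a []) (Sop U b))"
  unfolding Sop_def
  by (rule ext) (simp add: dl_smul smul_sadd_r smul_sadd_l smul_ssc_r smul_assoc, simp add: algebra_simps)

lemma Sop_Nil: "\<forall>g. U g [] = 0 \<Longrightarrow> Sop U a [] = 0"
  by (simp add: Sop_def smul_Nil)

lemma dl_sderiv: "dl h (sderiv U a) = sadd (dl h (Sop U a)) (sderiv U (dl h a))"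
  by (rule ext) (simp add: dl_def sderiv_def)

lemma sderiv_Nil: "sderiv U a [] = 0" by (simp add: sderiv_def)

lemma dd_smul:
  assumes U0: "\<forall>g. U g [] = 0"
  shows "dd U w (smul a b) = sadd (smul (sderiv U a) b) (smul a (sderiv U b)) w"
proof (induction w arbitrary: a b)
  case Nil
  then show ?case by (simp add: smul_Nil sderiv_Nil)
next
  case (Cons h w)
  have e1: "dd U w (dl h (smul a b)) = smul (sderiv U (dl h a)) b w + smul (dl h a) (sderiv U b) w
      + a [] * dd U w (dl h b)"
    by (simp add: dl_smul dd_sadd dd_ssc Cons.IH)
  have e2: "Sop U (smul a b) (h # w) = smul (dl h (Sop U a)) b w + a [] * Sop U b (h # w)"
    by (simp add: Sop_smul smul_Cons Sop_Nil[where U=U, OF U0])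
  show ?case
    apply (simp only: dd.simps e1 e2)
    apply (simp add: smul_Cons sderiv_Nil dl_sderiv smul_sadd_l)
    apply (simp add: sderiv_def algebra_simps)
    done
qed

lemma sderiv_smul:
  assumes U0: "\<forall>g. U g [] = 0"
  shows "sderiv U (smul a b) = sadd (smul (sderiv U a) b) (smul a (sderiv U b))"
  by (rule ext) (simp add: sderiv_def[of U "smul a b"] dd_smul[where U=U, OF U0])

lemma sderiv_sbr:
  assumes U0: "\<forall>g. U g [] = 0"
  shows "sderiv U (sbr a b) = sadd (sbr (sderiv U a) b) (sbr a (sderiv U b))"
  by (rule ext) (simp add: sbr_def sderiv_ssub sderiv_smul[where U=U, OF U0])

lemma dd_local:
  assumes U0: "\<forall>g. U g [] = 0"
  shows "(\<forall>u. length u \<le> length w \<longrightarrow> a u = b u) \<Longrightarrow> dd U w a = dd U w b"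
proof (induction w arbitrary: a b)
  case Nil
  then show ?case by simp
next
  case (Cons h w)
  have s: "smul (U g) (dl g a) (h # w) = smul (U g) (dl g b) (h # w)" for g
    unfolding smul_def
  proof (rule sum.cong[OF refl])
    fix k assume k: "k \<in> {..length (h # w)}"
    show "U g (take k (h # w)) * dl g a (drop k (h # w)) = U g (take k (h # w)) * dl g b (drop k (h # w))"
    proof (cases k)
      case 0
      then show ?thesis using U0 by simp
    next
      case (Suc k')
      have "length (g # drop k' w) \<le> length (h # w)" by simp
      then show ?thesis using Cons.prems Suc by (simp add: dl_def)
    qed
  qed
  have "Sop U a (h # w) = Sop U b (h # w)" by (simp add: Sop_def s)
  moreover have "dd U w (dl h a) = dd U w (dl h b)"
    using Cons.prems by (intro Cons.IH) (simp add: dl_def)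
  ultimately show ?case by simp
qed

lemma sderiv_trunc:
  assumes U0: "\<forall>g. U g [] = 0"
  shows "trunc n (sderiv U (trunc n a)) = trunc n (sderiv U a)"
  by (rule ext) (auto simp add: trunc_def sderiv_def intro: dd_local[where U=U, OF U0])

lemma sderiv_sone: "sderiv U sone = szero"
proof -
  have "dd U w sone = 0" for w
  proof (cases w)
    case Nil then show ?thesis by simp
  next
    case (Cons h v)
    have "dl g sone = szero" for g by (rule ext) (simp add: dl_def sone_def)
    then show ?thesis using Cons by (simp only: dd.simps Sop_def dd_szero smul_szero_r sadd_apply szero_apply add_0)
  qed
  then show ?thesis by (intro ext) (simp add: sderiv_def)
qed

lemma sderiv_sgen:
  assumes U0: "\<forall>g. U g [] = 0"
  shows "sderiv U (sgen g) = U g"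
proof (rule ext)
  fix w show "sderiv U (sgen g) w = U g w"
  proof (cases w)
    case Nil then show ?thesis using U0 by (simp add: sderiv_def)
  next
    case (Cons h v)
    have d1: "dl g' (sgen g) = (if g' = g then sone else szero)" for g'
      by (rule ext) (auto simp add: dl_def sgen_def sone_def)
    have sm: "smul c sone = c" for c
      by (rule ext) (simp add: smul_def sone_def if_distrib[where f="\<lambda>t. _ * t"] sum.delta'[where a="length _"] eq_commute[of "length _"] cong: if_cong)
    have ds: "dd U v sone = 0"
      using fun_cong[OF sderiv_sone[of U], of v] by (simp add: sderiv_def)
    have "dd U v (dl h (sgen g)) = 0"
      unfolding d1 using ds dd_szero by simp
    moreover have "Sop U (sgen g) (h # v) = U g (h # v)"
      unfolding Sop_def d1 by (cases g) (simp_all add: sm smul_szero_r)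
    ultimately show ?thesis using Cons by (simp add: sderiv_def)
  qed
qed

lemmas sapp = sadd_apply ssub_apply ssc_apply szero_apply
declare sadd_apply[simp del] ssub_apply[simp del] ssc_apply[simp del] szero_apply[simp del]



lemma trunc_apply: "trunc n a w = (if length w \<le> n then a w else 0)"
  by (simp add: trunc_def sapp)

lemma trunc_smul: "trunc n (smul (trunc n a) (trunc n b)) = trunc n (smul a b)"
proof (rule ext)
  fix w show "trunc n (smul (trunc n a) (trunc n b)) w = trunc n (smul a b) w"
  proof (cases "length w \<le> n")
    case True
    then show ?thesis unfolding trunc_apply smul_def
      by (auto intro!: sum.cong simp: trunc_apply)
  qed (simp add: trunc_apply)
qed


lemma trunc_trunc: "trunc m (trunc n a) = trunc (min m n) a"
  by (rule ext) (simp add: trunc_def sapp)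
lemma trunc_sadd: "trunc n (sadd a b) = sadd (trunc n a) (trunc n b)"
  by (rule ext) (simp add: trunc_def sapp)
lemma trunc_ssub: "trunc n (ssub a b) = ssub (trunc n a) (trunc n b)"
  by (rule ext) (simp add: trunc_def sapp)
lemma trunc_ssc: "trunc n (ssc c a) = ssc c (trunc n a)"
  by (rule ext) (simp add: trunc_def sapp)
lemma trunc_szero: "trunc n szero = szero"
  by (rule ext) (simp add: trunc_def szero_def)

lemma trunc_smul_l': "trunc n (smul (trunc n a) b) = trunc n (smul a b)"
proof -
  have "trunc n (smul (trunc n a) b) = trunc n (smul (trunc n (trunc n a)) (trunc n b))"
    by (rule trunc_smul[symmetric])
  also have "\<dots> = trunc n (smul a b)" by (simp add: trunc_trunc trunc_smul)
  finally show ?thesis .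
qed
lemma trunc_smul_r: "trunc n (smul a (trunc n b)) = trunc n (smul a b)"
proof -
  have "trunc n (smul a (trunc n b)) = trunc n (smul (trunc n a) (trunc n (trunc n b)))"
    by (rule trunc_smul[symmetric])
  also have "\<dots> = trunc n (smul a b)" by (simp add: trunc_trunc trunc_smul)
  finally show ?thesis .
qed

lemma trunc_sbr_l: "trunc n (sbr (trunc n a) b) = trunc n (sbr a b)"
  unfolding sbr_def trunc_ssub trunc_smul_l' trunc_smul_r ..
lemma trunc_sbr_r: "trunc n (sbr a (trunc n b)) = trunc n (sbr a b)"
  unfolding sbr_def trunc_ssub trunc_smul_l' trunc_smul_r ..
lemma trunc_sbr: "trunc n (sbr (trunc n a) (trunc n b)) = trunc n (sbr a b)"
  by (simp add: trunc_sbr_l trunc_sbr_r)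

definition hom :: "nat \<Rightarrow> ser \<Rightarrow> ser" where
  "hom j a = (\<lambda>w. if length w = j then a w else 0)"

definition ssum :: "'i set \<Rightarrow> ('i \<Rightarrow> ser) \<Rightarrow> ser" where
  "ssum I f = (\<lambda>w. \<Sum>i\<in>I. f i w)"

lemma smul_hom_supp:
  assumes "length w \<noteq> i + l"
  shows "smul (hom i a) (hom l b) w = 0"
  unfolding smul_def hom_def using assms
  by (intro sum.neutral) auto

lemma hom_smul: "hom j (smul a b) = ssum {..j} (\<lambda>i. smul (hom i a) (hom (j - i) b))"
proof (rule ext)
  fix w
  show "hom j (smul a b) w = ssum {..j} (\<lambda>i. smul (hom i a) (hom (j - i) b)) w"
  proof (cases "length w = j")
    case True
    have "ssum {..j} (\<lambda>i. smul (hom i a) (hom (j - i) b)) w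
        = (\<Sum>i\<le>j. \<Sum>k\<le>length w. (if i = k then a (take k w) * b (drop k w) else 0))"
      unfolding ssum_def smul_def hom_def using True
      by (intro sum.cong refl) auto
    also have "\<dots> = (\<Sum>k\<le>length w. \<Sum>i\<le>j. (if i = k then a (take k w) * b (drop k w) else 0))"
      by (rule sum.swap)
    also have "\<dots> = (\<Sum>k\<le>length w. a (take k w) * b (drop k w))"
      using True by (intro sum.cong refl) simp
    finally show ?thesis using True by (simp add: hom_def smul_def)
  next
    case False
    have "smul (hom i a) (hom (j - i) b) w = 0" if "i \<in> {..j}" for i
      using False that by (intro smul_hom_supp) auto
    then show ?thesis using False
      unfolding ssum_def by (simp add: hom_def)
  qed
qed

lemma ssum_insert: "finite I \<Longrightarrow> i \<notin> I \<Longrightarrow> ssum (insert i I) f = sadd (f i) (ssum I f)"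
  by (rule ext) (simp add: ssum_def sapp)
lemma ssum_empty: "ssum {} f = szero"
  by (rule ext) (simp add: ssum_def szero_def)

lemma ssum_closed:
  assumes "finite I" "szero \<in> S" "\<And>a b. a \<in> S \<Longrightarrow> b \<in> S \<Longrightarrow> sadd a b \<in> S"
    "\<And>i. i \<in> I \<Longrightarrow> f i \<in> S"
  shows "ssum I f \<in> S"
  using assms(1,4)
proof (induction I rule: finite_induct)
  case empty then show ?case using assms(2) by (simp add: ssum_empty)
next
  case (insert x F) then show ?case using assms(3) by (simp add: ssum_insert)
qed

lemma ssub_ssum: "ssub (ssum I f) (ssum I g) = ssum I (\<lambda>i. ssub (f i) (g i))"
  by (rule ext) (simp add: ssum_def sum_subtractf sapp)

lemma hom_sbr: "hom j (sbr a b) = ssum {..j} (\<lambda>i. sbr (hom i a) (hom (j - i) b))"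
proof -
  have "hom j (sbr a b) = ssub (hom j (smul a b)) (hom j (smul b a))"
    by (rule ext) (simp add: hom_def sbr_def sapp)
  also have "\<dots> = ssum {..j} (\<lambda>i. ssub (smul (hom i a) (hom (j - i) b)) (smul (hom (j - i) b) (hom i a)))"
  proof -
    have "hom j (smul b a) = ssum {..j} (\<lambda>i. smul (hom (j - i) b) (hom i a))"
    proof -
      have "hom j (smul b a) = ssum {..j} (\<lambda>i. smul (hom i b) (hom (j - i) a))" by (rule hom_smul)
      also have "\<dots> = ssum {..j} (\<lambda>i. smul (hom (j - i) b) (hom (j - (j - i)) a))"
        unfolding ssum_def
        by (rule ext, rule sum.reindex_bij_witness[where i="\<lambda>i. j - i" and j="\<lambda>i. j - i"]) auto
      also have "\<dots> = ssum {..j} (\<lambda>i. smul (hom (j - i) b) (hom i a))"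
        unfolding ssum_def by (rule ext, rule sum.cong) auto
      finally show ?thesis .
    qed
    then show ?thesis by (simp add: hom_smul ssub_ssum)
  qed
  finally show ?thesis by (simp add: sbr_def)
qed

lemma trunc_ssum_hom: "trunc m a = ssum {..m} (\<lambda>j. hom j a)"
proof (rule ext)
  fix w
  show "trunc m a w = ssum {..m} (\<lambda>j. hom j a) w"
    unfolding ssum_def hom_def trunc_apply
    by (simp add: sum.delta'[where a="length w"] eq_commute[of _ "length w"] cong: if_cong)
qed

lemma liepoly_szero: "szero \<in> liepoly"
proof -
  have "ssc 0 (sgen X) = szero" by (rule ext) (simp add: sapp)
  then show ?thesis using liepoly.scal[OF liepoly.gen[of X], of 0] by simp
qed

lemma liepoly_ssub: "a \<in> liepoly \<Longrightarrow> b \<in> liepoly \<Longrightarrow> ssub a b \<in> liepoly"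
proof -
  assume a: "a \<in> liepoly" and b: "b \<in> liepoly"
  have "ssub a b = sadd a (ssc (-1) b)" by (rule ext) (simp add: sapp)
  then show ?thesis using a b by (simp add: liepoly.add liepoly.scal)
qed

lemma liepoly_ssum: "finite I \<Longrightarrow> (\<And>i. i \<in> I \<Longrightarrow> f i \<in> liepoly) \<Longrightarrow> ssum I f \<in> liepoly"
  by (rule ssum_closed) (auto intro: liepoly_szero liepoly.add)

lemma hom_sadd: "hom j (sadd a b) = sadd (hom j a) (hom j b)"
  by (rule ext) (simp add: hom_def sapp)
lemma hom_ssc: "hom j (ssc c a) = ssc c (hom j a)"
  by (rule ext) (simp add: hom_def sapp)

lemma hom_liepoly: "a \<in> liepoly \<Longrightarrow> hom j a \<in> liepoly"
proof (induction a arbitrary: j rule: liepoly.induct)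
  case (gen g)
  show ?case
  proof (cases "j = 1")
    case True
    then have "hom j (sgen g) = sgen g" by (rule_tac ext) (simp add: hom_def sgen_def)
    then show ?thesis by (simp add: liepoly.gen)
  next
    case False
    then have "hom j (sgen g) = szero" by (rule_tac ext) (auto simp add: hom_def sgen_def sapp)
    then show ?thesis by (simp add: liepoly_szero)
  qed
next
  case (add a b) then show ?case by (simp add: hom_sadd liepoly.add)
next
  case (scal a c) then show ?case by (simp add: hom_ssc liepoly.scal)
next
  case (br a b) then show ?case by (simp add: hom_sbr liepoly_ssum liepoly.br)
qed

lemma trunc_liepoly: "a \<in> liepoly \<Longrightarrow> trunc m a \<in> liepoly"
  by (simp add: trunc_ssum_hom liepoly_ssum hom_liepoly)

lemma L_le_iff: "a \<in> L_le n \<longleftrightarrow> a \<in> liepoly \<and> trunc n a = a"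
  unfolding L_le_def trunc_def
  by (auto simp: fun_eq_iff)

lemma trunc_L_le: "a \<in> liepoly \<Longrightarrow> trunc n a \<in> L_le n"
  by (simp add: L_le_iff trunc_liepoly trunc_trunc)

lemma L_le_mono: "m \<le> n \<Longrightarrow> a \<in> L_le m \<Longrightarrow> a \<in> L_le n"
  unfolding L_le_def by auto

lemma comm_sub_ssum: "finite I \<Longrightarrow> (\<And>i. i \<in> I \<Longrightarrow> f i \<in> comm_sub n) \<Longrightarrow> ssum I f \<in> comm_sub n"
  by (rule ssum_closed) (auto intro: comm_sub.zero comm_sub.add)

lemma comm_sub_trunc: "c \<in> comm_sub (Suc n) \<Longrightarrow> trunc n c \<in> comm_sub n"
proof (induction c rule: comm_sub.induct)
  case zero then show ?case by (simp add: trunc_szero comm_sub.zero)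
next
  case (comm p q) then show ?case by (simp add: trunc_trunc comm_sub.comm)
next
  case (add a b) then show ?case by (simp add: trunc_sadd comm_sub.add)
next
  case (scal a c) then show ?case by (simp add: trunc_ssc comm_sub.scal)
qed

lemma sbr_hom_supp: "trunc m (sbr (hom i a) (hom l b)) = sbr (hom i a) (hom l b)" if "i + l \<le> m"
proof (rule ext)
  fix w show "trunc m (sbr (hom i a) (hom l b)) w = sbr (hom i a) (hom l b) w"
    using that smul_hom_supp[of w i l a b] smul_hom_supp[of w l i b a]
    by (auto simp: trunc_apply sbr_def sapp)
qed

lemma comm_sub_mono: "c \<in> comm_sub k \<Longrightarrow> k \<le> m \<Longrightarrow> c \<in> comm_sub m"
proof (induction c rule: comm_sub.induct)
  case zero then show ?case by (simp add: comm_sub.zero)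
next
  case (comm p q)
  have "trunc k (sbr p q) = ssum {..k} (\<lambda>j. ssum {..j} (\<lambda>i. sbr (hom i p) (hom (j - i) q)))"
    by (simp add: trunc_ssum_hom hom_sbr)
  also have "\<dots> \<in> comm_sub m"
  proof (rule comm_sub_ssum)
    fix j assume j: "j \<in> {..k}"
    show "ssum {..j} (\<lambda>i. sbr (hom i p) (hom (j - i) q)) \<in> comm_sub m"
    proof (rule comm_sub_ssum)
      fix i assume i: "i \<in> {..j}"
      then have "trunc m (sbr (hom i p) (hom (j - i) q)) = sbr (hom i p) (hom (j - i) q)"
        using comm.prems j by (intro sbr_hom_supp) simp
      then show "sbr (hom i p) (hom (j - i) q) \<in> comm_sub m"
        by (metis comm_sub.comm)
    qed simp
  qed simp
  finally show ?case .
next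
  case (add a b) then show ?case by (simp add: comm_sub.add)
next
  case (scal a c) then show ?case by (simp add: comm_sub.scal)
qed



definition Uf :: "ser \<Rightarrow> ser \<Rightarrow> gen \<Rightarrow> ser" where
  "Uf u1 u2 g = (case g of X \<Rightarrow> sbr (sgen X) u1 | Y \<Rightarrow> sbr (sgen Y) u2)"

lemma sbr_sgen_Nil: "sbr (sgen g) u [] = 0"
  by (simp add: sbr_def sapp smul_Nil sgen_def)

lemma Uf0: "\<forall>g. Uf u1 u2 g [] = 0"
  by (auto simp: Uf_def sbr_sgen_Nil split: gen.split)

lemma sderiv_sgen_Uf: "sderiv (Uf u1 u2) (sgen g) = Uf u1 u2 g"
  by (rule sderiv_sgen[where U="Uf u1 u2", OF Uf0])
lemma sderiv_sbr_Uf: "sderiv (Uf u1 u2) (sbr a b) = sadd (sbr (sderiv (Uf u1 u2) a) b) (sbr a (sderiv (Uf u1 u2) b))"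
  by (rule sderiv_sbr[where U="Uf u1 u2", OF Uf0])
lemma sderiv_trunc_Uf: "trunc n (sderiv (Uf u1 u2) (trunc n a)) = trunc n (sderiv (Uf u1 u2) a)"
  by (rule sderiv_trunc[where U="Uf u1 u2", OF Uf0])

lemma sderiv_liepoly:
  assumes u: "u1 \<in> liepoly" "u2 \<in> liepoly"
  shows "a \<in> liepoly \<Longrightarrow> sderiv (Uf u1 u2) a \<in> liepoly"
proof (induction a rule: liepoly.induct)
  case (gen g)
  then show ?case using u
    by (simp add: sderiv_sgen_Uf) (auto simp: Uf_def liepoly.br liepoly.gen split: gen.split)
next
  case (add a b) then show ?case by (simp add: sderiv_sadd liepoly.add)
next
  case (scal a c) then show ?case by (simp add: sderiv_ssc liepoly.scal)
next
  case (br a b) then show ?case by (simp add: sderiv_sbr_Uf liepoly.add liepoly.br)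
qed

definition Dm :: "ser \<Rightarrow> ser \<Rightarrow> nat \<Rightarrow> ser \<Rightarrow> ser" where
  "Dm u1 u2 m = (\<lambda>f. if f \<in> L_le m then trunc m (sderiv (Uf u1 u2) f) else szero)"

lemma L_le_liepoly: "f \<in> L_le m \<Longrightarrow> f \<in> liepoly"
  by (simp add: L_le_def)

lemma L_le_sadd: "f \<in> L_le m \<Longrightarrow> g \<in> L_le m \<Longrightarrow> sadd f g \<in> L_le m"
  unfolding L_le_def by (auto simp: liepoly.add sapp)
lemma L_le_ssc: "f \<in> L_le m \<Longrightarrow> ssc c f \<in> L_le m"
  unfolding L_le_def by (auto simp: liepoly.scal sapp)
lemma L_le_szero: "szero \<in> L_le m"
  unfolding L_le_def by (auto simp: liepoly_szero sapp)

lemma sgen_L_le: "1 \<le> m \<Longrightarrow> sgen g \<in> L_le m"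
  using liepoly.gen[of g] unfolding L_le_def by (auto simp: sgen_def)

lemma Dm_in: "f \<in> L_le m \<Longrightarrow> Dm u1 u2 m f = trunc m (sderiv (Uf u1 u2) f)"
  by (simp add: Dm_def)

lemma Dm_tder:
  assumes m: "1 \<le> m" and u: "u1 \<in> liepoly" "u2 \<in> liepoly"
  shows "Dm u1 u2 m \<in> tder m" "is_tang m (Dm u1 u2 m) (trunc m u1) (trunc m u2)"
proof -
  let ?U = "Uf u1 u2"
  have tang: "is_tang m (Dm u1 u2 m) (trunc m u1) (trunc m u2)"
    unfolding is_tang_def
    using u m
    by (simp add: trunc_L_le Dm_in sgen_L_le sderiv_sgen_Uf trunc_sbr_r) (simp add: Uf_def)
  show "is_tang m (Dm u1 u2 m) (trunc m u1) (trunc m u2)" by (rule tang)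
  show "Dm u1 u2 m \<in> tder m"
    unfolding tder_def
  proof (intro CollectI conjI ballI allI impI)
    fix f assume "f \<notin> L_le m" then show "Dm u1 u2 m f = szero" by (simp add: Dm_def)
  next
    fix f assume "f \<in> L_le m"
    then show "Dm u1 u2 m f \<in> L_le m"
      using u by (simp add: Dm_in trunc_L_le sderiv_liepoly L_le_liepoly)
  next
    fix f g assume "f \<in> L_le m" "g \<in> L_le m"
    then show "Dm u1 u2 m (sadd f g) = sadd (Dm u1 u2 m f) (Dm u1 u2 m g)"
      by (simp add: Dm_in L_le_sadd sderiv_sadd trunc_sadd)
  next
    fix f c assume "f \<in> L_le m"
    then show "Dm u1 u2 m (ssc c f) = ssc c (Dm u1 u2 m f)"
      by (simp add: Dm_in L_le_ssc sderiv_ssc trunc_ssc)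
  next
    fix f g assume f: "f \<in> L_le m" and g: "g \<in> L_le m"
    have "trunc m (sbr f g) \<in> L_le m"
      using f g by (simp add: trunc_L_le liepoly.br L_le_liepoly)
    then have "Dm u1 u2 m (trunc m (sbr f g)) = trunc m (sderiv ?U (sbr f g))"
      by (simp add: Dm_in sderiv_trunc_Uf)
    also have "\<dots> = trunc m (sadd (sbr (sderiv ?U f) g) (sbr f (sderiv ?U g)))"
      by (simp add: sderiv_sbr_Uf)
    also have "\<dots> = trunc m (sadd (sbr (Dm u1 u2 m f) g) (sbr f (Dm u1 u2 m g)))"
      using f g by (simp add: Dm_in trunc_sadd trunc_sbr_l trunc_sbr_r)
    finally show "Dm u1 u2 m (trunc m (sbr f g)) = trunc m (sadd (sbr (Dm u1 u2 m f) g) (sbr f (Dm u1 u2 m g)))" .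
  next
    show "\<exists>v1 v2. is_tang m (Dm u1 u2 m) v1 v2" using tang by blast
  qed
qed

inductive_set Tset :: "nat \<Rightarrow> ser set" for m where
  gen: "sgen g \<in> Tset m"
| add: "a \<in> Tset m \<Longrightarrow> b \<in> Tset m \<Longrightarrow> sadd a b \<in> Tset m"
| scal: "a \<in> Tset m \<Longrightarrow> ssc c a \<in> Tset m"
| br: "a \<in> Tset m \<Longrightarrow> b \<in> Tset m \<Longrightarrow> trunc m (sbr a b) \<in> Tset m"

lemma Tset_L_le: assumes "1 \<le> m" shows "a \<in> Tset m \<Longrightarrow> a \<in> L_le m"
proof (induction a rule: Tset.induct)
  case (gen g) then show ?case using assms by (simp add: sgen_L_le)
next
  case (add a b) then show ?case by (simp add: L_le_sadd)
next
  case (scal a c) then show ?case by (simp add: L_le_ssc)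
next
  case (br a b) then show ?case by (simp add: trunc_L_le liepoly.br L_le_liepoly)
qed

lemma trunc_sgen: "1 \<le> m \<Longrightarrow> trunc m (sgen g) = sgen g"
  by (rule ext) (auto simp: trunc_def sgen_def)

lemma liepoly_Tset: assumes "1 \<le> m" shows "a \<in> liepoly \<Longrightarrow> trunc m a \<in> Tset m"
proof (induction a rule: liepoly.induct)
  case (gen g) then show ?case using assms by (simp add: trunc_sgen Tset.gen)
next
  case (add a b) then show ?case by (simp add: trunc_sadd Tset.add)
next
  case (scal a c) then show ?case by (simp add: trunc_ssc Tset.scal)
next
  case (br a b) then show ?case by (metis trunc_sbr Tset.br)
qed

lemma tder_unique_T:
  assumes m: "1 \<le> m" and D: "D \<in> tder m" and t: "is_tang m D u1 u2"
  shows "f \<in> Tset m \<Longrightarrow> D f = trunc m (sderiv (Uf u1 u2) f)"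
proof (induction f rule: Tset.induct)
  case (gen g)
  then show ?case using t
    unfolding sderiv_sgen_Uf by (cases g) (simp_all add: is_tang_def Uf_def)
next
  case (add a b)
  then show ?case using D Tset_L_le[OF m]
    by (simp add: tder_def sderiv_sadd trunc_sadd)
next
  case (scal a c)
  then show ?case using D Tset_L_le[OF m]
    by (simp add: tder_def sderiv_ssc trunc_ssc)
next
  case (br a b)
  have a: "a \<in> L_le m" and b: "b \<in> L_le m" using br.hyps Tset_L_le[OF m] by auto
  have "D (trunc m (sbr a b)) = trunc m (sadd (sbr (D a) b) (sbr a (D b)))"
    using D a b by (simp add: tder_def)
  also have "\<dots> = trunc m (sderiv (Uf u1 u2) (sbr a b))"
    by (simp add: br.IH trunc_sadd trunc_sbr_l trunc_sbr_r sderiv_sbr_Uf)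
  also have "\<dots> = trunc m (sderiv (Uf u1 u2) (trunc m (sbr a b)))"
    by (simp add: sderiv_trunc_Uf)
  finally show ?case .
qed

lemma tder_unique:
  assumes m: "1 \<le> m" and D: "D \<in> tder m" and t: "is_tang m D u1 u2"
  shows "D = Dm u1 u2 m"
proof (rule ext)
  fix f show "D f = Dm u1 u2 m f"
  proof (cases "f \<in> L_le m")
    case True
    then have "f = trunc m f" "f \<in> liepoly" by (auto simp: L_le_iff)
    then have "f \<in> Tset m" using liepoly_Tset[OF m] by metis
    then show ?thesis using tder_unique_T[OF m D t] True by (simp add: Dm_in)
  next
    case False then show ?thesis using D by (simp add: tder_def Dm_def)
  qed
qed



lemma smul_sone_l: "smul sone c = c"
proof (rule ext)
  fix w show "smul sone c w = c w"
  proof (cases w)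
    case Nil then show ?thesis by (simp add: smul_Nil sone_def)
  next
    case (Cons h v)
    have "dl h sone = szero" by (rule ext) (simp add: dl_def sone_def szero_def)
    then show ?thesis using Cons by (simp only: smul_Cons smul_szero_l) (simp add: sone_def szero_def)
  qed
qed

lemma sgen_take_iff: "sgen g (take j w) \<noteq> 0 \<Longrightarrow> j \<le> length w \<Longrightarrow> j = 1 \<and> w \<noteq> []"
proof -
  assume a: "sgen g (take j w) \<noteq> 0" and j: "j \<le> length w"
  then have "take j w = [g]" by (simp add: sgen_def split: if_splits)
  then have "length (take j w) = 1" by simp
  then show ?thesis using j by auto
qed

lemma sbr_sgen_trunc: "sbr (sgen g) (trunc k u) = trunc (Suc k) (sbr (sgen g) u)"
proof (rule ext)
  fix w
  show "sbr (sgen g) (trunc k u) w = trunc (Suc k) (sbr (sgen g) u) w"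
  proof (cases "length w \<le> Suc k")
    case True
    have a: "smul (sgen g) (trunc k u) w = smul (sgen g) u w"
      unfolding smul_def
    proof (rule sum.cong[OF refl])
      fix j assume j: "j \<in> {..length w}"
      show "sgen g (take j w) * trunc k u (drop j w) = sgen g (take j w) * u (drop j w)"
      proof (cases "sgen g (take j w) = 0")
        case False
        then have "j = 1" "w \<noteq> []" using sgen_take_iff[of g j w] j by auto
        then have "length (drop j w) \<le> k" using True by simp
        then show ?thesis by (simp add: trunc_apply)
      qed simp
    qed
    have b: "smul (trunc k u) (sgen g) w = smul u (sgen g) w"
      unfolding smul_def
    proof (rule sum.cong[OF refl])
      fix j assume j: "j \<in> {..length w}"
      show "trunc k u (take j w) * sgen g (drop j w) = u (take j w) * sgen g (drop j w)"
      proof (cases "drop j w = [g]")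
        case True
        then have "length (drop j w) = 1" by simp
        then have "length (take j w) \<le> k" using \<open>length w \<le> Suc k\<close> by simp
        then show ?thesis by (simp add: trunc_apply)
      qed (simp add: sgen_def)
    qed
    show ?thesis using True a b by (simp add: sbr_def sapp trunc_apply)
  next
    case False
    have a: "smul (sgen g) (trunc k u) w = 0"
      unfolding smul_def
    proof (rule sum.neutral, rule ballI)
      fix j assume j: "j \<in> {..length w}"
      show "sgen g (take j w) * trunc k u (drop j w) = 0"
      proof (cases "sgen g (take j w) = 0")
        case False
        then have "j = 1" using sgen_take_iff[of g j w] j by auto
        then have "\<not> length (drop j w) \<le> k" using \<open>\<not> length w \<le> Suc k\<close> by simp
        then show ?thesis by (simp add: trunc_apply)
      qed simp
    qed
    have b: "smul (trunc k u) (sgen g) w = 0"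
      unfolding smul_def
    proof (rule sum.neutral, rule ballI)
      fix j assume j: "j \<in> {..length w}"
      show "trunc k u (take j w) * sgen g (drop j w) = 0"
      proof (cases "drop j w = [g]")
        case True
        then have "length (drop j w) = 1" by simp
        then have "\<not> length (take j w) \<le> k" using \<open>\<not> length w \<le> Suc k\<close> by simp
        then show ?thesis by (simp add: trunc_apply)
      qed (simp add: sgen_def)
    qed
    show ?thesis using False a b by (simp add: sbr_def sapp trunc_apply)
  qed
qed

lemma smul_dpart_sgen_local:
  assumes "u w = u' w"
  shows "smul (dpart g u) (sgen g) w = smul (dpart g u') (sgen g) w"
  unfolding smul_def
proof (rule sum.cong[OF refl])
  fix k assume "k \<in> {..length w}"
  show "dpart g u (take k w) * sgen g (drop k w) = dpart g u' (take k w) * sgen g (drop k w)"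
  proof (cases "drop k w = [g]")
    case True
    then have "take k w @ [g] = w" by (metis append_take_drop_id)
    then show ?thesis using assms by (simp add: dpart_def)
  qed (simp add: sgen_def)
qed

lemma jdiv_local:
  assumes "u1 w = u1' w" "u2 w = u2' w"
  shows "jdiv u1 u2 w = jdiv u1' u2' w"
  unfolding jdiv_def sadd_apply
  using smul_dpart_sgen_local[of u1 w u1' X, OF assms(1)] smul_dpart_sgen_local[of u2 w u2' Y, OF assms(2)] by simp

lemma jdiv_zero: "jdiv szero szero w = 0"
proof -
  have "dpart g szero = szero" for g by (rule ext) (simp add: dpart_def szero_def)
  then show ?thesis by (simp add: jdiv_def sapp smul_szero_l)
qed

lemma spow_hom:
  assumes s: "\<And>v. s v \<noteq> 0 \<Longrightarrow> length v = 1"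
  shows "spow s k w \<noteq> 0 \<Longrightarrow> length w = k"
proof (induction k arbitrary: w)
  case 0 then show ?case by (simp add: sone_def split: if_splits)
next
  case (Suc k)
  have "(\<Sum>j\<le>length w. s (take j w) * spow s k (drop j w)) \<noteq> 0"
    using Suc.prems by (simp add: smul_def)
  then obtain j where j: "j \<le> length w" "s (take j w) * spow s k (drop j w) \<noteq> 0"
    by (meson atMost_iff sum.not_neutral_contains_not_neutral)
  from j(2) have "s (take j w) \<noteq> 0" "spow s k (drop j w) \<noteq> 0" by auto
  then have "length (take j w) = 1" "length (drop j w) = k" using s Suc.IH by blast+
  then show ?case by simp
qed

definition Rc :: "(nat \<Rightarrow> complex) \<Rightarrow> ser" where
  "Rc r = (\<lambda>w. r (length w) * (spow (sadd (sgen X) (sgen Y)) (length w) w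
      - spow (sgen X) (length w) w - spow (sgen Y) (length w) w))"

lemma reval_hom:
  assumes s: "\<And>v. s v \<noteq> 0 \<Longrightarrow> length v = 1"
  shows "reval n r s w = (if length w \<le> n then r (length w) * spow s (length w) w else 0)"
proof -
  have z: "k \<noteq> length w \<Longrightarrow> spow s k w = 0" for k using spow_hom[OF s] by metis
  have "reval n r s w = (\<Sum>k\<le>n. if k = length w then r k * spow s k w else 0)"
    unfolding reval_def by (intro sum.cong refl) (auto simp: z)
  then show ?thesis by (simp add: sum.delta')
qed

lemma Rc_eq: "ssub (ssub (reval n r (sadd (sgen X) (sgen Y))) (reval n r (sgen X))) (reval n r (sgen Y))
   = trunc n (Rc r)"
proof -
  have h1: "\<And>v. sadd (sgen X) (sgen Y) v \<noteq> 0 \<Longrightarrow> length v = 1"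
    by (auto simp: sapp sgen_def split: if_splits)
  have h2: "\<And>v. sgen g v \<noteq> 0 \<Longrightarrow> length v = 1" for g
    by (auto simp: sgen_def split: if_splits)
  show ?thesis
  proof (rule ext)
    fix w
    have e1: "reval n r (sadd (sgen X) (sgen Y)) w = (if length w \<le> n then r (length w) * spow (sadd (sgen X) (sgen Y)) (length w) w else 0)"
      by (rule reval_hom) (rule h1)
    have e2: "reval n r (sgen X) w = (if length w \<le> n then r (length w) * spow (sgen X) (length w) w else 0)"
      by (rule reval_hom) (rule h2)
    have e3: "reval n r (sgen Y) w = (if length w \<le> n then r (length w) * spow (sgen Y) (length w) w else 0)"
      by (rule reval_hom) (rule h2)
    show "ssub (ssub (reval n r (sadd (sgen X) (sgen Y))) (reval n r (sgen X))) (reval n r (sgen Y)) w = trunc n (Rc r) w"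
      unfolding ssub_apply e1 e2 e3 by (simp add: trunc_apply Rc_def algebra_simps)
  qed
qed



lemma proj_Dm: "proj n (Dm u1 u2 (Suc n)) = Dm u1 u2 n"
proof (rule ext)
  fix f show "proj n (Dm u1 u2 (Suc n)) f = Dm u1 u2 n f"
  proof (cases "f \<in> L_le n")
    case True
    then have "f \<in> L_le (Suc n)" using L_le_mono[of n "Suc n"] by simp
    then show ?thesis using True by (simp add: proj_def Dm_in trunc_trunc)
  qed (simp add: proj_def Dm_def)
qed

lemma tder_Dm:
  assumes "D \<in> tder m" "1 \<le> m"
  obtains u1 u2 where "u1 \<in> liepoly" "u2 \<in> liepoly" "is_tang m D u1 u2" "D = Dm u1 u2 m"
proof -
  obtain u1 u2 where t: "is_tang m D u1 u2" using assms(1) by (auto simp: tder_def)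
  then have "u1 \<in> liepoly" "u2 \<in> liepoly" by (auto simp: is_tang_def L_le_def)
  then show ?thesis using that t tder_unique[OF assms(2,1) t] by blast
qed

lemma sderiv_trunc_ge: "n \<le> m \<Longrightarrow> trunc n (sderiv (Uf a b) (trunc m f)) = trunc n (sderiv (Uf a b) f)"
  by (metis sderiv_trunc_Uf trunc_trunc min.absorb1)

lemma comp_lemma:
  assumes b: "b1 \<in> liepoly" "b2 \<in> liepoly" and f: "f \<in> L_le n"
  shows "trunc n (Dm a1 a2 (Suc n) (Dm b1 b2 (Suc n) f)) = Dm a1 a2 n (Dm b1 b2 n f)"
proof -
  have f': "f \<in> L_le (Suc n)" using f L_le_mono[of n "Suc n"] by simp
  have e1: "Dm b1 b2 (Suc n) f \<in> L_le (Suc n)"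
    using f' b by (simp add: Dm_in trunc_L_le sderiv_liepoly L_le_liepoly)
  have e2: "Dm b1 b2 n f \<in> L_le n"
    using f b by (simp add: Dm_in trunc_L_le sderiv_liepoly L_le_liepoly)
  have "trunc n (Dm a1 a2 (Suc n) (Dm b1 b2 (Suc n) f))
      = trunc n (sderiv (Uf a1 a2) (sderiv (Uf b1 b2) f))"
    using e1 f' by (simp add: Dm_in trunc_trunc sderiv_trunc_ge)
  moreover have "Dm a1 a2 n (Dm b1 b2 n f) = trunc n (sderiv (Uf a1 a2) (sderiv (Uf b1 b2) f))"
    using e2 f by (simp add: Dm_in sderiv_trunc_Uf)
  ultimately show ?thesis by simp
qed

lemma Dm_szero: "Dm u1 u2 n szero = szero"
  by (simp add: Dm_in L_le_szero sderiv_szero trunc_szero)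

lemma hom_part:
  assumes n: "1 \<le> n" and D: "D \<in> tder (Suc n)" and E: "E \<in> tder (Suc n)"
  shows "proj n (dcomm D E) = dcomm (proj n D) (proj n E) \<and>
       proj n (dadd D E) = dadd (proj n D) (proj n E) \<and>
       (\<forall>c. proj n (dsc c D) = dsc c (proj n D))"
proof -
  have n1: "1 \<le> Suc n" by simp
  obtain a1 a2 where a: "a1 \<in> liepoly" "a2 \<in> liepoly" "D = Dm a1 a2 (Suc n)"
    using tder_Dm[OF D n1] by metis
  obtain b1 b2 where b: "b1 \<in> liepoly" "b2 \<in> liepoly" "E = Dm b1 b2 (Suc n)"
    using tder_Dm[OF E n1] by metis
  have pD: "proj n D = Dm a1 a2 n" using a by (simp add: proj_Dm)
  have pE: "proj n E = Dm b1 b2 n" using b by (simp add: proj_Dm)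
  have c1: "proj n (dcomm D E) = dcomm (proj n D) (proj n E)"
  proof (rule ext)
    fix f show "proj n (dcomm D E) f = dcomm (proj n D) (proj n E) f"
    proof (cases "f \<in> L_le n")
      case True
      then show ?thesis unfolding pD pE
        by (simp add: proj_def dcomm_def trunc_ssub a(3) b(3) comp_lemma a b)
    next
      case False
      then show ?thesis unfolding pD pE
      proof -
        have "dcomm (Dm a1 a2 n) (Dm b1 b2 n) f = ssub szero szero"
          using False by (simp add: dcomm_def Dm_def[of _ _ n] sderiv_szero trunc_szero)
        also have "\<dots> = szero" by (rule ext) (simp add: sapp)
        finally show "proj n (dcomm D E) f = dcomm (Dm a1 a2 n) (Dm b1 b2 n) f"
          using False by (simp add: proj_def)
      qed
    qed
  qed
  have c2: "proj n (dadd D E) = dadd (proj n D) (proj n E)"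
  proof (rule ext)
    fix f
    have z: "sadd szero szero = szero" by (rule ext) (simp add: sapp)
    show "proj n (dadd D E) f = dadd (proj n D) (proj n E) f"
      by (cases "f \<in> L_le n") (simp_all add: proj_def dadd_def trunc_sadd z)
  qed
  have c3: "proj n (dsc c D) = dsc c (proj n D)" for c
  proof (rule ext)
    fix f
    have z: "ssc c szero = szero" by (rule ext) (simp add: sapp)
    show "proj n (dsc c D) f = dsc c (proj n D) f"
      by (cases "f \<in> L_le n") (simp_all add: proj_def dsc_def trunc_ssc z)
  qed
  show ?thesis using c1 c2 c3 by blast
qed



abbreviation xy :: ser where "xy \<equiv> sadd (sgen X) (sgen Y)"

lemma xy_L_le: "1 \<le> m \<Longrightarrow> xy \<in> L_le m"
  by (simp add: L_le_sadd sgen_L_le)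

lemma sderiv_xy: "sderiv (Uf u1 u2) xy = sadd (sbr (sgen X) u1) (sbr (sgen Y) u2)"
  by (simp add: sderiv_sadd sderiv_sgen_Uf Uf_def)

lemma krv_down:
  assumes n: "1 \<le> n" and D: "D \<in> krv (Suc n)"
  shows "proj n D \<in> krv n"
proof -
  have n1: "1 \<le> Suc n" by simp
  from D have Dt: "D \<in> tder (Suc n)" and Dxy: "D xy = szero"
    and ex: "\<exists>u1 u2 r. is_tang (Suc n) D u1 u2 \<and>
        cyc_eq (Suc n) (jdiv u1 u2)
          (ssub (ssub (reval (Suc n) r xy) (reval (Suc n) r (sgen X))) (reval (Suc n) r (sgen Y)))"
    by (auto simp: krv_def)
  from ex obtain u1 u2 r where t: "is_tang (Suc n) D u1 u2"
    and cy: "cyc_eq (Suc n) (jdiv u1 u2)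
          (ssub (ssub (reval (Suc n) r xy) (reval (Suc n) r (sgen X))) (reval (Suc n) r (sgen Y)))"
    by blast
  have u: "u1 \<in> liepoly" "u2 \<in> liepoly" using t by (auto simp: is_tang_def L_le_def)
  have DD: "D = Dm u1 u2 (Suc n)" by (rule tder_unique[OF n1 Dt t])
  have pD: "proj n D = Dm u1 u2 n" using DD proj_Dm by simp
  have tdn: "Dm u1 u2 n \<in> tder n" and tgn: "is_tang n (Dm u1 u2 n) (trunc n u1) (trunc n u2)"
    using Dm_tder[OF n u] by auto
  have xy0: "Dm u1 u2 n xy = szero"
  proof -
    have "Dm u1 u2 n xy = trunc n (Dm u1 u2 (Suc n) xy)"
      using xy_L_le[OF n] xy_L_le[OF n1] by (simp add: Dm_in trunc_trunc)
    then show ?thesis using Dxy DD by (simp add: trunc_szero)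
  qed
  have cyn: "cyc_eq n (jdiv (trunc n u1) (trunc n u2))
      (ssub (ssub (reval n r xy) (reval n r (sgen X))) (reval n r (sgen Y)))"
  proof -
    let ?c = "trunc (Suc n) (ssub (jdiv u1 u2) (trunc (Suc n) (Rc r)))"
    have c: "?c \<in> comm_sub (Suc n)" using cy by (simp add: cyc_eq_def Rc_eq)
    have eq: "trunc n (ssub (jdiv (trunc n u1) (trunc n u2)) (trunc n (Rc r))) = trunc n ?c"
    proof (rule ext)
      fix w
      show "trunc n (ssub (jdiv (trunc n u1) (trunc n u2)) (trunc n (Rc r))) w = trunc n ?c w"
      proof (cases "length w \<le> n")
        case True
        have "jdiv (trunc n u1) (trunc n u2) w = jdiv u1 u2 w"
          using True by (intro jdiv_local) (simp_all add: trunc_apply)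
        then show ?thesis using True by (simp add: trunc_apply sapp)
      qed (simp add: trunc_apply)
    qed
    show ?thesis unfolding cyc_eq_def Rc_eq eq using comm_sub_trunc[OF c] .
  qed
  show ?thesis unfolding pD krv_def using tdn xy0 tgn cyn by blast
qed


lemma krv_up:
  assumes n: "1 \<le> n" and D: "D \<in> krv n"
  shows "D \<in> proj n ` krv (Suc n)"
proof -
  have n1: "1 \<le> Suc n" by simp
  from D have Dt: "D \<in> tder n" and Dxy: "D xy = szero"
    and ex: "\<exists>u1 u2 r. is_tang n D u1 u2 \<and>
        cyc_eq n (jdiv u1 u2)
          (ssub (ssub (reval n r xy) (reval n r (sgen X))) (reval n r (sgen Y)))"
    by (auto simp: krv_def)
  from ex obtain u1 u2 r where t: "is_tang n D u1 u2"
    and cy: "cyc_eq n (jdiv u1 u2)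
          (ssub (ssub (reval n r xy) (reval n r (sgen X))) (reval n r (sgen Y)))"
    by blast
  have u: "u1 \<in> liepoly" "u2 \<in> liepoly" using t by (auto simp: is_tang_def L_le_def)
  define v1 where "v1 = trunc (n - 1) u1"
  define v2 where "v2 = trunc (n - 1) u2"
  have v: "v1 \<in> liepoly" "v2 \<in> liepoly" using u by (simp_all add: v1_def v2_def trunc_liepoly)
  have sn: "Suc (n - 1) = n" using n by simp
  have sbX: "sbr (sgen X) v1 = trunc n (sbr (sgen X) u1)"
    unfolding v1_def sbr_sgen_trunc sn ..
  have sbY: "sbr (sgen Y) v2 = trunc n (sbr (sgen Y) u2)"
    unfolding v2_def sbr_sgen_trunc sn ..
  have tv: "is_tang n D v1 v2"
  proof -
    have "v1 \<in> L_le n" "v2 \<in> L_le n"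
      using u by (auto simp: v1_def v2_def intro: L_le_mono[OF _ trunc_L_le])
    then show ?thesis using t unfolding is_tang_def by (simp add: sbX sbY trunc_trunc)
  qed
  have DD: "D = Dm v1 v2 n" by (rule tder_unique[OF n Dt tv])
  define E where "E = Dm v1 v2 (Suc n)"
  have pE: "proj n E = D" using DD by (simp add: E_def proj_Dm)
  have Et: "E \<in> tder (Suc n)" and Etg: "is_tang (Suc n) E (trunc (Suc n) v1) (trunc (Suc n) v2)"
    using Dm_tder[OF n1 v] by (auto simp: E_def)
  have S: "sadd (sbr (sgen X) v1) (sbr (sgen Y) v2) = trunc n (sadd (sbr (sgen X) u1) (sbr (sgen Y) u2))"
    by (simp add: sbX sbY trunc_sadd)
  have Exy: "E xy = szero"
  proof -
    have "E xy = trunc n (sadd (sbr (sgen X) u1) (sbr (sgen Y) u2))"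
      using xy_L_le[OF n1] by (simp add: E_def Dm_in sderiv_xy S trunc_trunc)
    moreover have "D xy = trunc n (sadd (sbr (sgen X) u1) (sbr (sgen Y) u2))"
      using xy_L_le[OF n] by (simp add: DD Dm_in sderiv_xy S trunc_trunc)
    ultimately show ?thesis using Dxy by simp
  qed
  define r' where "r' = (\<lambda>k. if k < n then r k else 0)"
  have cyE: "cyc_eq (Suc n) (jdiv (trunc (Suc n) v1) (trunc (Suc n) v2))
      (ssub (ssub (reval (Suc n) r' xy) (reval (Suc n) r' (sgen X))) (reval (Suc n) r' (sgen Y)))"
  proof -
    let ?c = "trunc n (ssub (jdiv u1 u2) (trunc n (Rc r)))"
    have c: "?c \<in> comm_sub n" using cy by (simp add: cyc_eq_def Rc_eq)
    have c1: "trunc (n - 1) ?c \<in> comm_sub (n - 1)"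
      using comm_sub_trunc[of ?c "n - 1"] c by (simp only: sn)
    have c2: "trunc (n - 1) ?c \<in> comm_sub (Suc n)"
      by (rule comm_sub_mono[OF c1]) simp
    have Rc': "Rc r' w = (if length w < n then Rc r w else 0)" for w
      by (simp add: Rc_def r'_def)
    have eq: "trunc (Suc n) (ssub (jdiv (trunc (Suc n) v1) (trunc (Suc n) v2)) (trunc (Suc n) (Rc r')))
        = trunc (n - 1) ?c"
    proof (rule ext)
      fix w
      show "trunc (Suc n) (ssub (jdiv (trunc (Suc n) v1) (trunc (Suc n) v2)) (trunc (Suc n) (Rc r'))) w
          = trunc (n - 1) ?c w"
      proof (cases "length w \<le> n - 1")
        case True
        have "jdiv (trunc (Suc n) v1) (trunc (Suc n) v2) w = jdiv u1 u2 w"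
          using True by (intro jdiv_local) (auto simp add: trunc_apply v1_def v2_def)
        moreover have "length w < n" using True n by simp
        ultimately show ?thesis using True by (simp add: trunc_apply sapp Rc')
      next
        case False
        have "jdiv (trunc (Suc n) v1) (trunc (Suc n) v2) w = jdiv szero szero w"
          using False by (intro jdiv_local) (simp_all add: trunc_apply v1_def v2_def sapp)
        then have "jdiv (trunc (Suc n) v1) (trunc (Suc n) v2) w = 0" by (simp add: jdiv_zero)
        moreover have "\<not> length w < n" using False by simp
        ultimately show ?thesis using False by (simp add: trunc_apply sapp Rc')
      qed
    qed
    show ?thesis unfolding cyc_eq_def Rc_eq eq using c2 .
  qed
  have "E \<in> krv (Suc n)" unfolding krv_def using Et Exy Etg cyE by blast
  then show ?thesis using pE by blast
qed


theorem lemma3p12: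
  fixes n :: nat
  assumes "1 \<le> n"
  shows "proj n ` krv (Suc n) = krv n \<and>
    (\<forall>D\<in>krv (Suc n). \<forall>E\<in>krv (Suc n).
       proj n (dcomm D E) = dcomm (proj n D) (proj n E) \<and>
       proj n (dadd D E) = dadd (proj n D) (proj n E) \<and>
       (\<forall>c. proj n (dsc c D) = dsc c (proj n D)))"
proof -
  have s: "proj n ` krv (Suc n) = krv n"
    using krv_down[OF assms] krv_up[OF assms] by blast
  have h: "\<forall>D\<in>krv (Suc n). \<forall>E\<in>krv (Suc n).
       proj n (dcomm D E) = dcomm (proj n D) (proj n E) \<and>
       proj n (dadd D E) = dadd (proj n D) (proj n E) \<and>
       (\<forall>c. proj n (dsc c D) = dsc c (proj n D))"
  proof (intro ballI)
    fix D E assume "D \<in> krv (Suc n)" "E \<in> krv (Suc n)"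
    then have "D \<in> tder (Suc n)" "E \<in> tder (Suc n)" by (auto simp: krv_def)
    then show "proj n (dcomm D E) = dcomm (proj n D) (proj n E) \<and>
       proj n (dadd D E) = dadd (proj n D) (proj n E) \<and>
       (\<forall>c. proj n (dsc c D) = dsc c (proj n D))"
      by (rule hom_part[OF assms])
  qed
  show ?thesis using s h by blast
qed

end
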